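(* Let $I\ge 2$, let $\mathcal F_I$ be a saturated fraction of the $I\times I$ design $[I]\times[I]$, and let $E_{I+1}\subseteq[I+1]\times[I+1]$ with $\mathcal F_I\cap E_{I+1}=\emptyset$. Set $\mathcal F_{I+1}=\mathcal F_I\cup E_{I+1}$, viewed as a fraction of $[I+1]\times[I+1]$. Then $\mathcal F_{I+1}$ is saturated if and only if $E_{I+1}$ consists of exactly two points, both lying in $\{(i,j)\in[I+1]\times[I+1]: i=I+1 \text{ or } j=I+1\}$, and the margins of $\mathcal F_{I+1}$ satisfy $m_{A,I+1}\ge 1$ and $m_{B,I+1}\ge 1$.
   Context: For a fraction $\mathcal F\subseteq[I]\times[J]$, its margins are $m_{A,i}=\#\{(d_1,d_2)\in\mathcal F: d_1=i\}$ and $m_{B,j}=\#\{(d_1,d_2)\in\mathcal F: d_2=j\}$. For $(i,j)\in[I]\times[J]$ let $r_{(i,j)}\in\mathbb R^{I+J-1}$ be the row vector $(1,a_1,\dots,a_{I-1},b_1,\dots,b_{J-1})$ with $a_s=1$ iff $s=i$ and $b_t=1$ iff $t=j$ (all other entries $0$); $X_{\mathcal F}$ is the matrix with rows $r_{(i,j)}$, $(i,j)\in\mathcal F$. $\mathcal F$ is saturated if $\#\mathcal F=I+J-1$ and $X_{\mathcal F}$ is non-singular. *)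

theory Defs
  imports "Jordan_Normal_Form.Determinant" "HOL-Library.Product_Lexorder"
begin

definition fraction :: "nat \<Rightarrow> nat \<Rightarrow> (nat \<times> nat) set \<Rightarrow> bool" where
  "fraction I J F \<longleftrightarrow> F \<subseteq> {1..I} \<times> {1..J}"

definition margA :: "(nat \<times> nat) set \<Rightarrow> nat \<Rightarrow> nat" where
  "margA F i = card {d \<in> F. fst d = i}"

definition margB :: "(nat \<times> nat) set \<Rightarrow> nat \<Rightarrow> nat" where
  "margB F j = card {d \<in> F. snd d = j}"

(* row vector r_(i,j) = (1, a_1..a_{I-1}, b_1..b_{J-1}) of length I+J-1,
   index 0 is the constant, index s (1 \<le> s \<le> I-1) is a_s,
   index I-1+t (1 \<le> t \<le> J-1) is b_t *)
definition design_row :: "nat \<Rightarrow> nat \<Rightarrow> nat \<times> nat \<Rightarrow> real vec" where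
  "design_row I J d = vec (I + J - 1) (\<lambda>k.
     if k = 0 then 1
     else if k \<le> I - 1 then (if k = fst d then 1 else 0)
     else (if k - (I - 1) = snd d then 1 else 0))"

(* X_F: rows r_(i,j), (i,j) \<in> F (listed in lexicographic order; row order
   does not affect non-singularity) *)
definition design_matrix :: "nat \<Rightarrow> nat \<Rightarrow> (nat \<times> nat) set \<Rightarrow> real mat" where
  "design_matrix I J F = mat_of_rows (I + J - 1) (map (design_row I J) (sorted_list_of_set F))"

definition saturated :: "nat \<Rightarrow> nat \<Rightarrow> (nat \<times> nat) set \<Rightarrow> bool" where
  "saturated I J F \<longleftrightarrow> fraction I J F \<and> card F = I + J - 1 \<and> det (design_matrix I J F) \<noteq> 0"

end

theory Submission
  imports Defs
begin


lemma row_eq: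
  assumes "I \<ge> 1" "J \<ge> 1" "1 \<le> i" "i \<le> I" "1 \<le> j" "j \<le> J"
  shows "design_row I J (i,j) = unit_vec (I+J-1) 0
     + (if i \<le> I - 1 then unit_vec (I+J-1) i else 0\<^sub>v (I+J-1))
     + (if j \<le> J - 1 then unit_vec (I+J-1) (I-1+j) else 0\<^sub>v (I+J-1))"
  using assms by (intro eq_vecI) (auto simp: design_row_def unit_vec_def)

lemma row_dot:
  assumes "I \<ge> 1" "J \<ge> 1" "1 \<le> i" "i \<le> I" "1 \<le> j" "j \<le> J"
    and th: "(th::real vec) \<in> carrier_vec (I+J-1)"
  shows "design_row I J (i,j) \<bullet> th = th$0 + (if i \<le> I - 1 then th$i else 0)
      + (if j \<le> J - 1 then th$(I-1+j) else 0)"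
proof -
  let ?n = "I+J-1"
  have c: "(if i \<le> I - 1 then unit_vec ?n i else 0\<^sub>v ?n) \<in> carrier_vec ?n"
     "(if j \<le> J - 1 then unit_vec ?n (I-1+j) else 0\<^sub>v ?n) \<in> carrier_vec ?n" by auto
  have "design_row I J (i,j) \<bullet> th = unit_vec ?n 0 \<bullet> th
     + (if i \<le> I - 1 then unit_vec ?n i else 0\<^sub>v ?n) \<bullet> th
     + (if j \<le> J - 1 then unit_vec ?n (I-1+j) else 0\<^sub>v ?n) \<bullet> th"
    unfolding row_eq[OF assms(1-6)]
    using c th by (simp add: add_scalar_prod_distrib[of _ ?n])
  also have "\<dots> = th$0 + (if i \<le> I - 1 then th$i else 0)
      + (if j \<le> J - 1 then th$(I-1+j) else 0)"
    using assms by auto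
  finally show ?thesis .
qed


definition conn :: "nat \<Rightarrow> nat \<Rightarrow> (nat \<times> nat) set \<Rightarrow> bool" where
  "conn I J F \<longleftrightarrow> (\<forall>u v. (\<forall>(i,j)\<in>F. u i + v j = (0::real)) \<longrightarrow> (\<forall>i\<in>{1..I}. \<forall>j\<in>{1..J}. u i + v j = 0))"

lemma dm_basic:
  assumes fr: "fraction I J F" and cF: "card F = I+J-1"
  shows "design_matrix I J F \<in> carrier_mat (I+J-1) (I+J-1)"
    and "\<And>k th. k < I+J-1 \<Longrightarrow> (design_matrix I J F *\<^sub>v th) $ k
          = design_row I J (sorted_list_of_set F ! k) \<bullet> th"
    and "\<And>d. d \<in> F \<Longrightarrow> \<exists>k < I+J-1. sorted_list_of_set F ! k = d"
    and "\<And>k. k < I+J-1 \<Longrightarrow> sorted_list_of_set F ! k \<in> F"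
proof -
  have fin: "finite F" using fr unfolding fraction_def
    by (meson finite_SigmaI finite_atLeastAtMost finite_subset)
  have len: "length (sorted_list_of_set F) = I+J-1" using cF fin by simp
  show "design_matrix I J F \<in> carrier_mat (I+J-1) (I+J-1)"
    unfolding design_matrix_def using len mat_of_rows_carrier(1) by (metis length_map)
  show "\<And>k th. k < I+J-1 \<Longrightarrow> (design_matrix I J F *\<^sub>v th) $ k
          = design_row I J (sorted_list_of_set F ! k) \<bullet> th"
    unfolding design_matrix_def using len by (simp add: design_row_def)
  show "\<And>d. d \<in> F \<Longrightarrow> \<exists>k < I+J-1. sorted_list_of_set F ! k = d"
    using len fin by (metis in_set_conv_nth set_sorted_list_of_set)
  show "\<And>k. k < I+J-1 \<Longrightarrow> sorted_list_of_set F ! k \<in> F"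
    using len fin by (metis nth_mem set_sorted_list_of_set)
qed

definition uu :: "nat \<Rightarrow> real vec \<Rightarrow> nat \<Rightarrow> real" where
  "uu I th i = th$0 + (if i \<le> I - 1 then th$i else 0)"
definition vv :: "nat \<Rightarrow> nat \<Rightarrow> real vec \<Rightarrow> nat \<Rightarrow> real" where
  "vv I J th j = (if j \<le> J - 1 then th$(I-1+j) else 0)"

lemma row_dot_uv:
  assumes "I \<ge> 1" "J \<ge> 1" "fraction I J F" "d \<in> F"
    and th: "(th::real vec) \<in> carrier_vec (I+J-1)"
  shows "design_row I J d \<bullet> th = uu I th (fst d) + vv I J th (snd d)"
proof -
  obtain i j where d: "d = (i,j)" by force
  have "1 \<le> i" "i \<le> I" "1 \<le> j" "j \<le> J" using assms(3,4) d unfolding fraction_def by auto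
  from row_dot[OF assms(1,2) this th] show ?thesis unfolding d uu_def vv_def by simp
qed

lemma det_conn:
  assumes I: "I \<ge> 1" and J: "J \<ge> 1" and fr: "fraction I J F" and cF: "card F = I+J-1"
  shows "det (design_matrix I J F) \<noteq> 0 \<longleftrightarrow> conn I J F"
proof -
  let ?n = "I+J-1"
  let ?M = "design_matrix I J F"
  note b = dm_basic[OF fr cF]
  have ker: "?M *\<^sub>v th = 0\<^sub>v ?n \<longleftrightarrow> (\<forall>d\<in>F. design_row I J d \<bullet> th = 0)" for th
  proof
    assume "?M *\<^sub>v th = 0\<^sub>v ?n"
    then show "\<forall>d\<in>F. design_row I J d \<bullet> th = 0"
      using b(2,3) by (metis index_zero_vec(1))
  next
    assume h: "\<forall>d\<in>F. design_row I J d \<bullet> th = 0"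
    show "?M *\<^sub>v th = 0\<^sub>v ?n"
      apply (rule eq_vecI)
      using b(1,2,4) h apply auto[1]
      using b(1) by auto
  qed
  have det0: "det ?M \<noteq> 0 \<longleftrightarrow> (\<forall>th\<in>carrier_vec ?n. (\<forall>d\<in>F. design_row I J d \<bullet> th = 0) \<longrightarrow> th = 0\<^sub>v ?n)"
    using det_0_iff_vec_prod_zero[OF b(1)] ker by blast
  show ?thesis
  proof
    assume d: "det ?M \<noteq> 0"
    show "conn I J F" unfolding conn_def
    proof (intro allI impI ballI)
      fix u v :: "nat \<Rightarrow> real" and i j
      assume z: "\<forall>(i,j)\<in>F. u i + v j = 0" and i: "i \<in> {1..I}" and j: "j \<in> {1..J}"
      define th where "th = vec ?n (\<lambda>k. if k=0 then u I + v J else if k \<le> I-1 then u k - u I else v (k-(I-1)) - v J)"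
      have thc: "th \<in> carrier_vec ?n" unfolding th_def by simp
      have rd: "design_row I J (i',j') \<bullet> th = u i' + v j'" if "i' \<in> {1..I}" "j' \<in> {1..J}" for i' j'
        using that I J by (subst row_dot[OF I J _ _ _ _ thc]; cases "i' = I"; cases "j' = J") (auto simp: th_def)
      have "\<forall>d\<in>F. design_row I J d \<bullet> th = 0"
      proof
        fix d assume "d \<in> F"
        then obtain i' j' where "d = (i',j')" "i' \<in> {1..I}" "j' \<in> {1..J}"
          using fr unfolding fraction_def by auto
        then show "design_row I J d \<bullet> th = 0" using rd z \<open>d \<in> F\<close> by auto
      qed
      with d det0 thc have "th = 0\<^sub>v ?n" by blast
      then have "design_row I J (i,j) \<bullet> th = 0"
        by (simp add: design_row_def)
      then show "u i + v j = 0" using rd[OF i j] by simp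
    qed
  next
    assume c: "conn I J F"
    show "det ?M \<noteq> 0" unfolding det0
    proof (intro ballI impI)
      fix th :: "real vec" assume thc: "th \<in> carrier_vec ?n"
        and z: "\<forall>d\<in>F. design_row I J d \<bullet> th = 0"
      have "\<forall>(i,j)\<in>F. uu I th i + vv I J th j = 0"
        using z row_dot_uv[OF I J fr _ thc] by fastforce
      then have g: "\<forall>i\<in>{1..I}. \<forall>j\<in>{1..J}. uu I th i + vv I J th j = 0"
        using c unfolding conn_def by blast
      have t0: "th$0 = 0" proof -
        have "\<not> I \<le> I - 1" "\<not> J \<le> J - 1" using I J by auto
        then show ?thesis using g[rule_format, of I J] I J by (simp add: uu_def vv_def)
      qed
      show "th = 0\<^sub>v ?n"
      proof (rule eq_vecI)
        show "dim_vec th = dim_vec (0\<^sub>v ?n)" using thc by simp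
        fix k assume "k < dim_vec (0\<^sub>v ?n)"
        then have k: "k < ?n" by simp
        show "th $ k = 0\<^sub>v ?n $ k"
        proof (cases "k = 0")
          case True then show ?thesis using t0 k by simp
        next
          case False
          show ?thesis
          proof (cases "k \<le> I - 1")
            case True
            have "uu I th k + vv I J th J = 0" using g False True I J by auto
            moreover have "\<not> J \<le> J - 1" using J by auto
            ultimately show ?thesis using True False t0 k J by (simp add: uu_def vv_def)
          next
            case F2: False
            have "k-(I-1) \<in> {1..J}" "I \<in> {1..I}" using F2 k I J by auto
            then have "uu I th I + vv I J th (k-(I-1)) = 0" using g by blast
            moreover have "\<not> I \<le> I - 1" "k-(I-1) \<le> J - 1" "I - 1 + (k-(I-1)) = k" using F2 k I by auto
            ultimately show ?thesis using F2 False t0 k I by (simp add: uu_def vv_def)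
          qed
        qed
      qed
    qed
  qed
qed

lemma det_surj:
  assumes I: "I \<ge> 1" and J: "J \<ge> 1" and fr: "fraction I J F" and cF: "card F = I+J-1"
    and d: "det (design_matrix I J F) \<noteq> 0"
  shows "\<exists>u v. \<forall>(i,j)\<in>F. u i + v j = (g (i,j) :: real)"
proof -
  let ?n = "I+J-1"
  let ?M = "design_matrix I J F"
  let ?L = "sorted_list_of_set F"
  note b = dm_basic[OF fr cF]
  from det_non_zero_imp_unit[OF b(1) d, of "()"]
  obtain B where B: "B \<in> carrier_mat ?n ?n" and MB: "?M * B = 1\<^sub>m ?n"
    unfolding Units_def ring_mat_def by auto
  define y where "y = vec ?n (\<lambda>k. g (?L ! k))"
  define th where "th = B *\<^sub>v y"
  have thc: "th \<in> carrier_vec ?n" unfolding th_def y_def using B by (simp add: mult_mat_vec_carrier)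
  have "?M *\<^sub>v th = y" unfolding th_def
    using assoc_mult_mat_vec[OF b(1) B, of y] MB by (simp add: y_def)
  then have e: "design_row I J (?L ! k) \<bullet> th = g (?L ! k)" if "k < ?n" for k
    using b(2)[OF that, of th] that by (simp add: y_def)
  have "\<forall>(i,j)\<in>F. uu I th i + vv I J th j = g (i,j)"
  proof (intro ballI, clarify)
    fix i j assume ij: "(i,j) \<in> F"
    then obtain k where k: "k < ?n" "?L ! k = (i,j)" using b(3) by blast
    show "uu I th i + vv I J th j = g (i,j)"
      using e[OF k(1)] k(2) row_dot_uv[OF I J fr ij thc] by simp
  qed
  then show ?thesis by blast
qed




theorem lemma4p4:
  fixes I :: nat and F E :: "(nat \<times> nat) set"
  assumes "I \<ge> 2"
    and "saturated I I F"
    and "E \<subseteq> {1..I+1} \<times> {1..I+1}"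
    and "F \<inter> E = {}"
  shows "saturated (I+1) (I+1) (F \<union> E) \<longleftrightarrow>
           (card E = 2 \<and> (\<forall>(i,j)\<in>E. i = I+1 \<or> j = I+1) \<and>
            margA (F \<union> E) (I+1) \<ge> 1 \<and> margB (F \<union> E) (I+1) \<ge> 1)"
proof -
  have I1: "I \<ge> 1" "I + 1 \<ge> 1" using assms(1) by auto
  have frF: "fraction I I F" and cF: "card F = I+I-1" and dF: "det (design_matrix I I F) \<noteq> 0"
    using assms(2) unfolding saturated_def by auto
  have cnF: "conn I I F" using det_conn[OF I1(1) I1(1) frF cF] dF by simp
  have Fsub: "F \<subseteq> {1..I} \<times> {1..I}" using frF unfolding fraction_def .
  have finF: "finite F" by (rule finite_subset[OF Fsub]) auto
  have finE: "finite E" by (rule finite_subset[OF assms(3)]) auto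
  have cU: "card (F \<union> E) = card F + card E" using card_Un_disjoint[OF finF finE assms(4)] .
  have frU: "fraction (I+1) (I+1) (F \<union> E)" using Fsub assms(3) unfolding fraction_def by auto
  have finU: "finite (F \<union> E)" using finF finE by simp
  show ?thesis
  proof
    assume s: "saturated (I+1) (I+1) (F \<union> E)"
    have cU2: "card (F \<union> E) = (I+1)+(I+1)-1" and dU: "det (design_matrix (I+1) (I+1) (F \<union> E)) \<noteq> 0"
      using s unfolding saturated_def by auto
    have cnU: "conn (I+1) (I+1) (F \<union> E)" using det_conn[OF I1(2) I1(2) frU cU2] dU by simp
    have c2: "card E = 2" using cU cU2 cF I1 by simp
    have lines: "\<forall>(i,j)\<in>E. i = I+1 \<or> j = I+1"
    proof (rule ccontr)
      assume "\<not> ?thesis"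
      then obtain i j where ij: "(i,j) \<in> E" "i \<noteq> I+1" "j \<noteq> I+1" by auto
      then have ijr: "i \<in> {1..I}" "j \<in> {1..I}" using assms(3) by auto
      obtain u v where uv: "\<forall>(a,b)\<in>F \<union> E. u a + v b = (if (a,b) = (i,j) then 1 else (0::real))"
        using det_surj[OF I1(2) I1(2) frU cU2 dU, of "\<lambda>d. if d = (i,j) then 1 else 0"] by blast
      have "u a + v b = 0" if ab: "(a,b) \<in> F" for a b
      proof -
        have "(a,b) \<noteq> (i,j)" using assms(4) ij(1) ab by blast
        moreover have "(a,b) \<in> F \<union> E" using ab by simp
        from bspec[OF uv this] have "u a + v b = (if (a,b) = (i,j) then 1 else (0::real))" by simp
        ultimately show ?thesis by simp
      qed
      then have "\<forall>(a,b)\<in>F. u a + v b = 0" by auto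
      with cnF ijr have "u i + v j = 0" unfolding conn_def by blast
      moreover have "(i,j) \<in> F \<union> E" using ij(1) by simp
      from bspec[OF uv this] have "u i + v j = 1" by simp
      ultimately show False by simp
    qed
    have mA: "margA (F \<union> E) (I+1) \<ge> 1"
    proof (rule ccontr)
      assume "\<not> ?thesis"
      then have "card {d \<in> F \<union> E. fst d = I+1} = 0" unfolding margA_def by simp
      then have e: "{d \<in> F \<union> E. fst d = I+1} = {}" using finU by simp
      define u where "u = (\<lambda>i. if i = I+1 then 1 else (0::real))"
      have "\<forall>(a,b)\<in>F \<union> E. u a + (\<lambda>_. 0) b = 0" using e unfolding u_def by auto
      with cnU have "u (I+1) + (\<lambda>_. 0) 1 = 0" unfolding conn_def by fastforce
      then show False unfolding u_def by simp
    qed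
    have mB: "margB (F \<union> E) (I+1) \<ge> 1"
    proof (rule ccontr)
      assume "\<not> ?thesis"
      then have "card {d \<in> F \<union> E. snd d = I+1} = 0" unfolding margB_def by simp
      then have e: "{d \<in> F \<union> E. snd d = I+1} = {}" using finU by simp
      define v where "v = (\<lambda>i. if i = I+1 then 1 else (0::real))"
      have "\<forall>(a,b)\<in>F \<union> E. (\<lambda>_. 0) a + v b = 0" using e unfolding v_def by auto
      with cnU have "(\<lambda>_. 0) 1 + v (I+1) = 0" unfolding conn_def by fastforce
      then show False unfolding v_def by simp
    qed
    show "card E = 2 \<and> (\<forall>(i,j)\<in>E. i = I+1 \<or> j = I+1) \<and>
            margA (F \<union> E) (I+1) \<ge> 1 \<and> margB (F \<union> E) (I+1) \<ge> 1"
      using c2 lines mA mB by blast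
  next
    assume h: "card E = 2 \<and> (\<forall>(i,j)\<in>E. i = I+1 \<or> j = I+1) \<and>
            margA (F \<union> E) (I+1) \<ge> 1 \<and> margB (F \<union> E) (I+1) \<ge> 1"
    have cU2: "card (F \<union> E) = (I+1)+(I+1)-1" using cU cF h I1 by simp
    have "{d \<in> F \<union> E. fst d = I+1} \<noteq> {}" using h unfolding margA_def by (metis card.empty not_one_le_zero)
    then obtain b where b: "(I+1, b) \<in> E" using Fsub by force
    have "{d \<in> F \<union> E. snd d = I+1} \<noteq> {}" using h unfolding margB_def by (metis card.empty not_one_le_zero)
    then obtain c where c: "(c, I+1) \<in> E" using Fsub by force
    have Eln: "\<forall>(i,j)\<in>E. i = I+1 \<or> j = I+1" using h by blast
    have cn: "conn (I+1) (I+1) (F \<union> E)" unfolding conn_def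
    proof (intro allI impI)
      fix u v :: "nat \<Rightarrow> real"
      assume z: "\<forall>(i,j)\<in>F \<union> E. u i + v j = 0"
      have zF: "\<forall>(i,j)\<in>F. u i + v j = 0" using z by blast
      have g: "\<forall>i\<in>{1..I}. \<forall>j\<in>{1..I}. u i + v j = 0"
        using cnF zF unfolding conn_def by blast
      have one: "(1::nat) \<in> {1..I}" using I1 by simp
      have gg: "u i + v j = 0" if "i\<in>{1..I}" "j\<in>{1..I}" for i j using g that by blast
      have ui: "u i = u 1" if "i \<in> {1..I}" for i
        using gg[OF that one] gg[OF one one] by linarith
      have vj: "v j = - u 1" if "j \<in> {1..I}" for j
        using gg[OF one that] by linarith
      have "(I+1,b) \<in> F \<union> E" using b by simp
      from bspec[OF z this] have zb: "u (I+1) + v b = 0" by simp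
      have "(c,I+1) \<in> F \<union> E" using c by simp
      from bspec[OF z this] have zc: "u c + v (I+1) = 0" by simp
      have brng: "b \<in> {1..I+1}" and crng: "c \<in> {1..I+1}" using b c assms(3) by auto
      have key: "u (I+1) = u 1 \<and> v (I+1) = - u 1"
      proof (cases "b = I+1")
        case False
        then have ub: "u (I+1) = u 1" using zb vj[of b] brng by auto
        show ?thesis
        proof (cases "c = I+1")
          case True then show ?thesis using zc ub by auto
        next
          case False then show ?thesis using zc ub ui[of c] crng by auto
        qed
      next
        case True
        have "E - {(I+1,I+1)} \<noteq> {}"
        proof
          assume "E - {(I+1,I+1)} = {}"
          then have "E \<subseteq> {(I+1,I+1)}" by blast
          then have "card E \<le> card {(I+1,I+1)}" by (intro card_mono) auto
          then have "card E \<le> 1" by simp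
          then show False using h by simp
        qed
        then obtain p q where pq: "(p,q) \<in> E" "(p,q) \<noteq> (I+1,I+1)" by auto
        have pr: "p \<in> {1..I+1}" "q \<in> {1..I+1}" using pq assms(3) by auto
        have uu: "u (I+1) + v (I+1) = 0" using zb True by simp
        have zp: "u p + v q = 0" using z pq(1) by auto
        from Eln pq(1) have "p = I+1 \<or> q = I+1" by auto
        then show ?thesis
        proof
          assume p: "p = I+1"
          then have "q \<in> {1..I}" using pq pr by auto
          then have "u (I+1) = u 1" using zp p vj[of q] by auto
          then show ?thesis using uu by auto
        next
          assume q: "q = I+1"
          then have "p \<in> {1..I}" using pq pr by auto
          then have "v (I+1) = - u 1" using zp q ui[of p] by auto
          then show ?thesis using uu by auto
        qed
      qed
      have ua: "u i = u 1" if "i \<in> {1..I+1}" for i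
      proof (cases "i = I+1")
        case True then show ?thesis using key by simp
      next
        case False then have "i \<in> {1..I}" using that by auto
        then show ?thesis by (rule ui)
      qed
      have va: "v j = - u 1" if "j \<in> {1..I+1}" for j
      proof (cases "j = I+1")
        case True then show ?thesis using key by simp
      next
        case False then have "j \<in> {1..I}" using that by auto
        then show ?thesis by (rule vj)
      qed
      show "\<forall>i\<in>{1..I+1}. \<forall>j\<in>{1..I+1}. u i + v j = 0"
      proof (intro ballI)
        fix i j assume "i \<in> {1..I+1}" "j \<in> {1..I+1}"
        then have "u i = u 1" "v j = - u 1" using ua va by blast+
        then show "u i + v j = 0" by linarith
      qed
    qed
    have "det (design_matrix (I+1) (I+1) (F \<union> E)) \<noteq> 0"
      using det_conn[OF I1(2) I1(2) frU cU2] cn by simp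
    then show "saturated (I+1) (I+1) (F \<union> E)"
      unfolding saturated_def using frU cU2 by simp
  qed
qed

end
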